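(* Let $1\le k\le\infty$ and $\mathbf n=(n_i)$ positive integers such that $\{\ln n_i\}_{1\le i\le k}$ is rationally independent. Then the topological $k$-graph $\Lambda_{\mathbf n}$ satisfies Condition (A).
   Context: $\mathbf n^p=\prod n_i^{p_i}$. $\Lambda_{\mathbf n}=\bigsqcup_{p\in\mathbb N^k}\mathbb T\times\{p\}$ with vertices $\mathbb T\times\{0\}$, $r(z,p)=(z,0)$, $s(z,p)=(z^{\mathbf n^p},0)$, $d(z,p)=p$, composition $(z,p)(z^{\mathbf n^p},q)=(z,p+q)$, topology of a disjoint union of circles. An infinite path in a (topological) $k$-graph $\Lambda$ is a map $\mu$ from $\{(p,q)\in\mathbb N^k\times\mathbb N^k:p\le q\}$ to $\Lambda$ with $d(\mu(p,q))=q-p$ and $\mu(p,q)\mu(q,r)=\mu(p,r)$; its range is $\mu(0,0)$; the shift is $\sigma^m(\mu)(p,q)=\mu(p+m,q+m)$. Condition (A): for every $v\in\Lambda^0$ and every open neighbourhood $V$ of $v$ there exist $v'\in V$ and an infinite path $\mu$ with range $v'$ such that $\sigma^p(\mu)\neq\sigma^q(\mu)$ whenever $p\neq q$. Rationally independent means every finite subfamily is linearly independent over $\mathbb Q$. *)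

theory Defs
  imports "HOL-Analysis.Analysis" "HOL-Library.Extended_Nat"
begin

text \<open>Index set {i. 1 <= i <= k} is rendered 0-based as {i. i < k}, k an extended natural
 (k = \<infinity> allowed). Degrees: N^k = finitely supported functions nat => nat vanishing outside
 the index set, ordered pointwise.\<close>

definition idx :: "enat \<Rightarrow> nat set" where
  "idx k = {i. enat i < k}"

definition degs :: "enat \<Rightarrow> (nat \<Rightarrow> nat) set" where
  "degs k = {p. finite {i. p i \<noteq> 0} \<and> (\<forall>i. i \<notin> idx k \<longrightarrow> p i = 0)}"

definition npow :: "(nat \<Rightarrow> nat) \<Rightarrow> (nat \<Rightarrow> nat) \<Rightarrow> nat" where
  "npow n p = (\<Prod>i\<in>{i. p i \<noteq> 0}. n i ^ p i)"

type_synonym morph = "complex \<times> (nat \<Rightarrow> nat)"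

definition Lam :: "enat \<Rightarrow> morph set" where
  "Lam k = {(z, p). norm z = 1 \<and> p \<in> degs k}"

definition lrng :: "morph \<Rightarrow> morph" where
  "lrng m = (fst m, (\<lambda>_. 0))"

definition lsrc :: "(nat \<Rightarrow> nat) \<Rightarrow> morph \<Rightarrow> morph" where
  "lsrc n m = (fst m ^ npow n (snd m), (\<lambda>_. 0))"

definition ldeg :: "morph \<Rightarrow> (nat \<Rightarrow> nat)" where
  "ldeg m = snd m"

text \<open>Composition (z,p)(z^{n^p},q) = (z,p+q), defined when the source of the first equals the range
 of the second.\<close>

definition lcomp :: "morph \<Rightarrow> morph \<Rightarrow> morph" where
  "lcomp a b = (fst a, (\<lambda>i. snd a i + snd b i))"

text \<open>Infinite paths: maps on {(p,q). p <= q} (represented as total functions, only the values on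
 this domain matter).\<close>

definition inf_path :: "(nat \<Rightarrow> nat) \<Rightarrow> enat \<Rightarrow> ((nat \<Rightarrow> nat) \<Rightarrow> (nat \<Rightarrow> nat) \<Rightarrow> morph) \<Rightarrow> bool" where
  "inf_path n k \<mu> \<longleftrightarrow>
     (\<forall>p\<in>degs k. \<forall>q\<in>degs k. p \<le> q \<longrightarrow>
        \<mu> p q \<in> Lam k \<and> ldeg (\<mu> p q) = (\<lambda>i. q i - p i)) \<and>
     (\<forall>p\<in>degs k. \<forall>q\<in>degs k. \<forall>r\<in>degs k. p \<le> q \<longrightarrow> q \<le> r \<longrightarrow>
        lsrc n (\<mu> p q) = lrng (\<mu> q r) \<and> lcomp (\<mu> p q) (\<mu> q r) = \<mu> p r)"

definition path_range :: "((nat \<Rightarrow> nat) \<Rightarrow> (nat \<Rightarrow> nat) \<Rightarrow> morph) \<Rightarrow> morph" where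
  "path_range \<mu> = \<mu> (\<lambda>_. 0) (\<lambda>_. 0)"

definition shift_eq :: "enat \<Rightarrow> ((nat \<Rightarrow> nat) \<Rightarrow> (nat \<Rightarrow> nat) \<Rightarrow> morph) \<Rightarrow> (nat \<Rightarrow> nat) \<Rightarrow> (nat \<Rightarrow> nat) \<Rightarrow> bool" where
  "shift_eq k \<mu> m m' \<longleftrightarrow> (\<forall>p\<in>degs k. \<forall>q\<in>degs k. p \<le> q \<longrightarrow>
      \<mu> (\<lambda>i. p i + m i) (\<lambda>i. q i + m i) = \<mu> (\<lambda>i. p i + m' i) (\<lambda>i. q i + m' i))"

text \<open>Condition (A); vertices (z,0) with z in the circle, topology of the circle (relative topology
 from the complex plane).\<close>

definition condition_A :: "(nat \<Rightarrow> nat) \<Rightarrow> enat \<Rightarrow> bool" where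
  "condition_A n k \<longleftrightarrow>
    (\<forall>z V. norm z = 1 \<longrightarrow> open V \<longrightarrow> z \<in> V \<longrightarrow>
      (\<exists>z' \<mu>. z' \<in> V \<and> norm z' = 1 \<and> inf_path n k \<mu> \<and> path_range \<mu> = (z', (\<lambda>_. 0)) \<and>
         (\<forall>p\<in>degs k. \<forall>q\<in>degs k. p \<noteq> q \<longrightarrow> \<not> shift_eq k \<mu> p q)))"

definition rat_indep :: "(nat \<Rightarrow> real) \<Rightarrow> nat set \<Rightarrow> bool" where
  "rat_indep x I \<longleftrightarrow> (\<forall>F c. finite F \<longrightarrow> F \<subseteq> I \<longrightarrow>
      (\<Sum>i\<in>F. of_rat (c i) * x i) = 0 \<longrightarrow> (\<forall>i\<in>F. c i = 0))"

end

theory Submission imports Defs begin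

lemma aper_point:
  fixes z :: complex
  assumes "norm z = 1" "open V" "z \<in> V"
  shows "\<exists>z'\<in>V. norm z' = 1 \<and> (\<forall>a b::nat. a \<noteq> b \<longrightarrow> z' ^ a \<noteq> z' ^ b)"
proof -
  have z0: "z \<noteq> 0" using assms by auto
  have "sgn z = z" using assms by (simp add: sgn_div_norm)
  then have zc: "cis (Arg z) = z" using Arg_correct[OF z0] by simp
  have "open (cis -` V)"
    using assms(2) continuous_on_cis[OF continuous_on_id] by (metis open_vimage)
  moreover have "Arg z \<in> cis -` V" using zc assms by simp
  ultimately obtain e where e: "e > 0" "ball (Arg z) e \<subseteq> cis -` V"
    using open_contains_ball by blast
  define a where "a = Arg z / (2*pi)"
  have "uncountable {a<..<a + e/(2*pi)}" using e by (simp add: uncountable_open_interval)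
  then have "\<not> {a<..<a + e/(2*pi)} \<subseteq> \<rat>" using countable_rat countable_subset by blast
  then obtain s where s: "a < s" "s < a + e/(2*pi)" "s \<notin> \<rat>" by (auto simp: subset_eq)
  define t where "t = 2 * pi * s"
  have "dist (Arg z) t < e" using s unfolding t_def a_def dist_real_def
    by (simp add: field_simps)
  then have tV: "cis t \<in> V" using e by auto
  have "cis t ^ a \<noteq> cis t ^ b" if "a \<noteq> b" for a b :: nat
  proof
    assume h: "cis t ^ a = cis t ^ b"
    {
      fix a b :: nat assume ab: "b < a" and h: "cis t ^ a = cis t ^ b"
      have "cis t ^ a = cis t ^ b * cis t ^ (a - b)" using ab by (simp flip: power_add)
      then have "cis t ^ (a - b) = 1" using h by (simp add: cis_neq_zero)
      then have "cis (real (a-b) * t) = 1" by (metis Complex.DeMoivre)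
      then have "exp (\<i> * of_real (real (a-b) * t)) = 1" by (simp only: cis_conv_exp)
      then obtain m :: int where m: "real (a-b) * t = of_int (2*m) * pi" by (auto simp: exp_eq_1)
      have "(s * real (a-b)) * (2*pi) = of_int m * (2*pi)" using m unfolding t_def by (simp add: algebra_simps)
      then have "s * real (a-b) = of_int m" by simp
      then have "s = of_int m / real (a-b)" using ab by (simp add: field_simps)
      then have "s \<in> \<rat>" by simp
      with s have False by simp
    }
    then show False using h that by (metis linorder_neqE_nat)
  qed
  then show ?thesis using tV by (intro bexI[of _ "cis t"]) auto
qed

lemma npow_eq:
  assumes "finite S" "{i. p i \<noteq> 0} \<subseteq> S"
  shows "npow n p = (\<Prod>i\<in>S. n i ^ p i)"
  unfolding npow_def by (rule prod.mono_neutral_left) (use assms in auto)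

lemma npow_add:
  assumes "finite {i. p i \<noteq> 0}" "finite {i. q i \<noteq> 0}"
  shows "npow n (\<lambda>i. p i + q i) = npow n p * npow n q"
proof -
  let ?S = "{i. p i \<noteq> 0} \<union> {i. q i \<noteq> 0}"
  have "npow n (\<lambda>i. p i + q i) = (\<Prod>i\<in>?S. n i ^ (p i + q i))"
    by (rule npow_eq) (use assms in auto)
  also have "\<dots> = (\<Prod>i\<in>?S. n i ^ p i) * (\<Prod>i\<in>?S. n i ^ q i)"
    by (simp add: power_add prod.distrib)
  also have "\<dots> = npow n p * npow n q"
    using npow_eq[of ?S p n] npow_eq[of ?S q n] assms by auto
  finally show ?thesis .
qed

lemma degs_fin: "p \<in> degs k \<Longrightarrow> finite {i. p i \<noteq> 0}"
  by (simp add: degs_def)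

lemma npow_inj:
  assumes pos: "\<forall>i\<in>idx k. n i > 0"
    and ind: "rat_indep (\<lambda>i. ln (real (n i))) (idx k)"
    and m: "m \<in> degs k" and m': "m' \<in> degs k"
    and eq: "npow n m = npow n m'"
  shows "m = m'"
proof -
  let ?F = "{i. m i \<noteq> 0} \<union> {i. m' i \<noteq> 0}"
  have fin: "finite ?F" using m m' by (simp add: degs_def)
  have Fsub: "?F \<subseteq> idx k" using m m' by (auto simp: degs_def)
  have lnp: "ln (real (npow n p)) = (\<Sum>i\<in>?F. real (p i) * ln (real (n i)))"
    if "{i. p i \<noteq> 0} \<subseteq> ?F" for p
  proof -
    have "real (npow n p) = (\<Prod>i\<in>?F. real (n i) ^ p i)"
      using npow_eq[OF fin that, of n] by simp
    also have "ln \<dots> = (\<Sum>i\<in>?F. ln (real (n i) ^ p i))"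
      proof (rule ln_prod[OF fin])
      fix i assume "i \<in> ?F"
      then have "n i > 0" using pos Fsub by blast
      then show "real (n i) ^ p i \<noteq> 0" by simp
    qed
    also have "\<dots> = (\<Sum>i\<in>?F. real (p i) * ln (real (n i)))"
      by (rule sum.cong) (use pos Fsub in \<open>auto simp: ln_realpow\<close>)
    finally show ?thesis .
  qed
  define c :: "nat \<Rightarrow> rat" where "c i = of_int (int (m i) - int (m' i))" for i
  have "(\<Sum>i\<in>?F. of_rat (c i) * ln (real (n i))) =
        (\<Sum>i\<in>?F. real (m i) * ln (real (n i))) - (\<Sum>i\<in>?F. real (m' i) * ln (real (n i)))"
    unfolding sum_subtractf[symmetric]
  proof (rule sum.cong)
    fix i
    have "of_rat (c i) = real (m i) - real (m' i)"
      by (simp add: c_def of_rat_diff)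
    then show "of_rat (c i) * ln (real (n i)) = real (m i) * ln (real (n i)) - real (m' i) * ln (real (n i))"
      by (simp add: left_diff_distrib)
  qed simp
  also have "\<dots> = 0" using lnp[of m] lnp[of m'] eq by auto
  finally have S0: "(\<Sum>i\<in>?F. of_rat (c i) * ln (real (n i))) = 0" .
  have c0: "c i = 0" if "i \<in> ?F" for i
    using ind[unfolded rat_indep_def, rule_format, OF fin Fsub S0 that] .
  show ?thesis
  proof
    fix i show "m i = m' i"
    proof (cases "i \<in> ?F")
      case True then show ?thesis using c0[OF True] by (simp add: c_def)
    next
      case False then show ?thesis by simp
    qed
  qed
qed

theorem mainTheorem9:
  fixes k :: enat and n :: "nat \<Rightarrow> nat"
  assumes "k \<ge> 1"
    and "\<forall>i\<in>idx k. n i > 0"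
    and "rat_indep (\<lambda>i. ln (real (n i))) (idx k)"
  shows "condition_A n k"
  unfolding condition_A_def
proof (intro allI impI)
  fix z :: complex and V assume zV: "norm z = 1" "open V" "z \<in> V"
  obtain w where w: "w \<in> V" "norm w = 1" "\<And>a b::nat. a \<noteq> b \<Longrightarrow> w ^ a \<noteq> w ^ b"
    using aper_point[OF zV] by blast
  define \<mu> where "\<mu> p q = (w ^ npow n p, (\<lambda>i. q i - p i))" for p q :: "nat \<Rightarrow> nat"
  have ip: "inf_path n k \<mu>"
    unfolding inf_path_def
  proof (intro conjI ballI impI)
    fix p q assume pq: "p \<in> degs k" "q \<in> degs k" "p \<le> q"
    have "(\<lambda>i. q i - p i) \<in> degs k"
      using pq(2) unfolding degs_def by (auto elim: finite_subset[rotated])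
    then show "\<mu> p q \<in> Lam k" using w by (simp add: \<mu>_def Lam_def norm_power)
    show "ldeg (\<mu> p q) = (\<lambda>i. q i - p i)" by (simp add: \<mu>_def ldeg_def)
  next
    fix p q r assume pq: "p \<in> degs k" "q \<in> degs k" "r \<in> degs k" "p \<le> q" "q \<le> r"
    have qe: "q = (\<lambda>i. p i + (q i - p i))" using pq(4) by (auto simp: le_fun_def fun_eq_iff)
    have fd: "finite {i. q i - p i \<noteq> 0}"
      using degs_fin[OF pq(2)] by (auto elim: finite_subset[rotated])
    have "npow n q = npow n p * npow n (\<lambda>i. q i - p i)"
      by (subst qe, rule npow_add) (use degs_fin[OF pq(1)] fd in auto)
    then show "lsrc n (\<mu> p q) = lrng (\<mu> q r)"
      by (simp add: lsrc_def lrng_def \<mu>_def power_mult)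
    show "lcomp (\<mu> p q) (\<mu> q r) = \<mu> p r"
      using pq(4,5) by (auto simp: lcomp_def \<mu>_def le_fun_def fun_eq_iff)
  qed
  have n0: "npow n (\<lambda>_. 0) = 1" by (simp add: npow_def)
  have pr: "path_range \<mu> = (w, (\<lambda>_. 0))" by (simp add: path_range_def \<mu>_def n0)
  have z0: "(\<lambda>_. 0::nat) \<in> degs k" by (simp add: degs_def)
  have "\<not> shift_eq k \<mu> p q" if pq: "p \<in> degs k" "q \<in> degs k" "p \<noteq> q" for p q
  proof
    assume "shift_eq k \<mu> p q"
    then have "\<mu> p p = \<mu> q q" unfolding shift_eq_def using z0 by fastforce
    then have "w ^ npow n p = w ^ npow n q" by (simp add: \<mu>_def)
    then have "npow n p = npow n q" using w(3) by blast
    then show False using npow_inj[OF assms(2,3) pq(1,2)] pq(3) by blast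
  qed
  then show "\<exists>z' \<mu>. z' \<in> V \<and> norm z' = 1 \<and> inf_path n k \<mu> \<and> path_range \<mu> = (z', (\<lambda>_. 0)) \<and>
         (\<forall>p\<in>degs k. \<forall>q\<in>degs k. p \<noteq> q \<longrightarrow> \<not> shift_eq k \<mu> p q)"
    using w ip pr by blast
qed

end
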